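(* Let $n_1,n_2,K_1,K_2$ be positive integers with $K_i\le n_i$. Fix clustering functions $z_1:\{1,\dots,n_1\}\to\{1,\dots,K_1\}$ and $z_2:\{1,\dots,n_2\}\to\{1,\dots,K_2\}$. Let $\mathcal D$ be the set of (non-symmetric) DCBM matrices of size $n_1\times n_2$ with $K_1\times K_2$ blocks, i.e. the matrices $\Theta\in[0,1]^{n_1\times n_2}$ of the form $$\Theta_{ij}=B_{z_1(i),z_2(j)}\,u_i\,v_j$$ for some $B\in\mathbb R_+^{K_1\times K_2}$, $u\in\mathbb R_+^{n_1}$ and $v\in\mathbb R_+^{n_2}$. Then for every $\delta\in(0,1]$ there is a $\delta$-net of $\mathcal D$ in Frobenius norm whose cardinality has logarithm at most $$(K_1K_2+n_1+n_2)\ln\Big(\frac{9}{\delta}\Big)+\Big(K_1K_2+\frac{n_1+n_2}{2}\Big)\ln(n_1n_2).$$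
   Context: A $\delta$-net of a set $\mathcal S$ of matrices in Frobenius norm is a finite set $\mathcal Y$ such that for every $S\in\mathcal S$ there is $Y\in\mathcal Y$ with $\|S-Y\|_F\le\delta$. *)

theory Defs
  imports Complex_Main
begin

text \<open>Matrices of size n1 x n2 are represented as functions nat => nat => real,
  indices 0-based (i < n1, j < n2). Clustering functions map {..<n} into {..<K}.\<close>

definition frob_dist :: "nat \<Rightarrow> nat \<Rightarrow> (nat \<Rightarrow> nat \<Rightarrow> real) \<Rightarrow> (nat \<Rightarrow> nat \<Rightarrow> real) \<Rightarrow> real" where
  "frob_dist n1 n2 A C = sqrt (\<Sum>i<n1. \<Sum>j<n2. (A i j - C i j)^2)"

text \<open>Non-symmetric DCBM matrices with entries in [0,1]; entries outside the index
  range are fixed to 0 so that each matrix has a unique representative.\<close>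
definition dcbm_set :: "nat \<Rightarrow> nat \<Rightarrow> (nat \<Rightarrow> nat) \<Rightarrow> (nat \<Rightarrow> nat) \<Rightarrow> (nat \<Rightarrow> nat \<Rightarrow> real) set" where
  "dcbm_set n1 n2 z1 z2 = {\<Theta>.
     (\<forall>i j. \<not> (i < n1 \<and> j < n2) \<longrightarrow> \<Theta> i j = 0) \<and>
     (\<forall>i<n1. \<forall>j<n2. 0 \<le> \<Theta> i j \<and> \<Theta> i j \<le> 1) \<and>
     (\<exists>(B::nat \<Rightarrow> nat \<Rightarrow> real) (u::nat \<Rightarrow> real) (v::nat \<Rightarrow> real).
        (\<forall>a b. 0 \<le> B a b) \<and> (\<forall>i. 0 \<le> u i) \<and> (\<forall>j. 0 \<le> v j) \<and>
        (\<forall>i<n1. \<forall>j<n2. \<Theta> i j = B (z1 i) (z2 j) * u i * v j))}"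

definition is_delta_net :: "nat \<Rightarrow> nat \<Rightarrow> real \<Rightarrow> (nat \<Rightarrow> nat \<Rightarrow> real) set \<Rightarrow> (nat \<Rightarrow> nat \<Rightarrow> real) set \<Rightarrow> bool" where
  "is_delta_net n1 n2 \<delta> S Y \<longleftrightarrow> finite Y \<and> (\<forall>A\<in>S. \<exists>C\<in>Y. frob_dist n1 n2 A C \<le> \<delta>)"

end

theory Submission
  imports Defs "HOL-Library.FuncSet"
begin

lemma approx_floor:
  fixes x :: real and m :: nat
  assumes "0 \<le> x" "x \<le> 1" "0 < m"
  shows "nat \<lfloor>x * m\<rfloor> \<le> m \<and> 0 \<le> x - real (nat \<lfloor>x * m\<rfloor>) / m \<and> x - real (nat \<lfloor>x * m\<rfloor>) / m \<le> 1 / m"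
proof -
  have xm: "0 \<le> x * m" "x * m \<le> m" using assms by (auto simp: mult_le_cancel_right1)
  have f0: "0 \<le> \<lfloor>x * m\<rfloor>" using xm by simp
  have r: "real (nat \<lfloor>x * m\<rfloor>) = of_int \<lfloor>x * m\<rfloor>" using f0 by simp
  have a: "of_int \<lfloor>x * m\<rfloor> \<le> x * m" by (rule of_int_floor_le)
  have b: "x * m < of_int \<lfloor>x * m\<rfloor> + 1" by linarith
  have "\<lfloor>x * m\<rfloor> \<le> int m" using xm(2) by (metis floor_of_nat floor_mono)
  hence c1: "nat \<lfloor>x * m\<rfloor> \<le> m" by simp
  have mp: "(0::real) < m" using assms by simp
  have "of_int \<lfloor>x * m\<rfloor> / m \<le> x" using a mp by (simp add: divide_le_eq)
  moreover have "x - of_int \<lfloor>x * m\<rfloor> / m \<le> 1 / m"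
  proof -
    have "x * m - of_int \<lfloor>x * m\<rfloor> \<le> 1" using b by linarith
    hence "(x * m - of_int \<lfloor>x * m\<rfloor>) / m \<le> 1 / m" using mp by (rule divide_right_mono[OF _ less_imp_le])
    moreover have "(x * m - of_int \<lfloor>x * m\<rfloor>) / m = x - of_int \<lfloor>x * m\<rfloor> / m" using mp by (simp add: field_simps)
    ultimately show ?thesis by simp
  qed
  ultimately show ?thesis using c1 r by simp
qed

lemma entry_err:
  fixes x y z x' y' z' e :: real
  assumes "0 \<le> x" "x \<le> 1" "0 \<le> y" "y \<le> 1" "0 \<le> z" "z \<le> 1"
    "0 \<le> x'" "x' \<le> 1" "0 \<le> y'" "y' \<le> 1" "0 \<le> z'" "z' \<le> 1"
    "\<bar>x - x'\<bar> \<le> e" "\<bar>y - y'\<bar> \<le> e" "\<bar>z - z'\<bar> \<le> e"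
  shows "\<bar>x*y*z - x'*y'*z'\<bar> \<le> 3 * e"
proof -
  have eq: "x*y*z - x'*y'*z' = (x-x')*(y*z) + x'*((y-y')*z) + (x'*y')*(z-z')"
    by (simp add: algebra_simps)
  have 1: "\<bar>(x-x')*(y*z)\<bar> \<le> e"
  proof -
    have "\<bar>(x-x')*(y*z)\<bar> = \<bar>x-x'\<bar> * (y*z)" using assms by (simp add: abs_mult)
    also have "\<dots> \<le> e * 1" using assms by (intro mult_mono) (auto simp: mult_le_one)
    finally show ?thesis by simp
  qed
  have 2: "\<bar>x'*((y-y')*z)\<bar> \<le> e"
  proof -
    have "\<bar>x'*((y-y')*z)\<bar> = x' * (\<bar>y-y'\<bar> * z)" using assms by (simp add: abs_mult)
    also have "\<dots> \<le> 1 * (e * 1)" using assms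
      by (intro mult_mono) (auto intro: mult_mono)
    finally show ?thesis by simp
  qed
  have 3: "\<bar>(x'*y')*(z-z')\<bar> \<le> e"
  proof -
    have "\<bar>(x'*y')*(z-z')\<bar> = (x'*y') * \<bar>z-z'\<bar>" using assms by (simp add: abs_mult)
    also have "\<dots> \<le> 1 * e" using assms by (intro mult_mono) (auto simp: mult_le_one)
    finally show ?thesis by simp
  qed
  show ?thesis unfolding eq using 1 2 3 by linarith
qed

lemma normalize:
  assumes "\<Theta> \<in> dcbm_set n1 n2 z1 z2"
  shows "\<exists>B u v. (\<forall>a b. 0 \<le> B a b \<and> B a b \<le> 1) \<and> (\<forall>i. 0 \<le> u i \<and> u i \<le> 1)
     \<and> (\<forall>j. 0 \<le> v j \<and> v j \<le> 1) \<and> (\<forall>i<n1. \<forall>j<n2. \<Theta> i j = B (z1 i) (z2 j) * u i * v j)"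
proof -
  from assms obtain B u v where th01: "\<forall>i<n1. \<forall>j<n2. 0 \<le> \<Theta> i j \<and> \<Theta> i j \<le> 1"
    and Bp: "\<forall>a b. 0 \<le> B a b" and up: "\<forall>i. 0 \<le> u i" and vp: "\<forall>j. 0 \<le> v j"
    and th: "\<forall>i<n1. \<forall>j<n2. \<Theta> i j = B (z1 i) (z2 j) * u i * v j"
    unfolding dcbm_set_def by blast
  define M where "M a = Max (insert 0 (u ` {i. i < n1 \<and> z1 i = a}))" for a
  define N where "N b = Max (insert 0 (v ` {j. j < n2 \<and> z2 j = b}))" for b
  have Mge: "u i \<le> M (z1 i)" if "i < n1" for i
    unfolding M_def using that by (intro Max_ge) auto
  have Nge: "v j \<le> N (z2 j)" if "j < n2" for j
    unfolding N_def using that by (intro Max_ge) auto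
  have M0: "0 \<le> M a" for a unfolding M_def by (intro Max_ge) auto
  have N0: "0 \<le> N b" for b unfolding N_def by (intro Max_ge) auto
  have Min: "\<exists>i<n1. z1 i = a \<and> u i = M a" if "M a \<noteq> 0" for a
  proof -
    have "M a \<in> insert 0 (u ` {i. i < n1 \<and> z1 i = a})" unfolding M_def by (intro Max_in) auto
    thus ?thesis using that by auto
  qed
  have Nin: "\<exists>j<n2. z2 j = b \<and> v j = N b" if "N b \<noteq> 0" for b
  proof -
    have "N b \<in> insert 0 (v ` {j. j < n2 \<and> z2 j = b})" unfolding N_def by (intro Max_in) auto
    thus ?thesis using that by auto
  qed
  define u' where "u' i = (if i < n1 \<and> M (z1 i) \<noteq> 0 then u i / M (z1 i) else 0)" for i
  define v' where "v' j = (if j < n2 \<and> N (z2 j) \<noteq> 0 then v j / N (z2 j) else 0)" for j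
  define B' where "B' a b = B a b * M a * N b" for a b
  have "\<forall>a b. 0 \<le> B' a b \<and> B' a b \<le> 1"
  proof (intro allI)
    fix a b
    show "0 \<le> B' a b \<and> B' a b \<le> 1"
    proof (cases "M a = 0 \<or> N b = 0")
      case True thus ?thesis unfolding B'_def by auto
    next
      case False
      then obtain i j where "i<n1" "z1 i = a" "u i = M a" "j<n2" "z2 j = b" "v j = N b"
        using Min Nin by metis
      thus ?thesis using th th01 Bp M0 N0 unfolding B'_def by force
    qed
  qed
  moreover have "\<forall>i. 0 \<le> u' i \<and> u' i \<le> 1"
    unfolding u'_def using up M0 Mge by (auto simp: divide_le_eq_1 less_le)
  moreover have "\<forall>j. 0 \<le> v' j \<and> v' j \<le> 1"
    unfolding v'_def using vp N0 Nge by (auto simp: divide_le_eq_1 less_le)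
  moreover have "\<forall>i<n1. \<forall>j<n2. \<Theta> i j = B' (z1 i) (z2 j) * u' i * v' j"
  proof (intro allI impI)
    fix i j assume ij: "i < n1" "j < n2"
    show "\<Theta> i j = B' (z1 i) (z2 j) * u' i * v' j"
    proof (cases "M (z1 i) = 0 \<or> N (z2 j) = 0")
      case True
      hence "u i = 0 \<or> v j = 0" using Mge Nge up vp ij by (metis antisym)
      thus ?thesis using th ij True unfolding B'_def by auto
    next
      case False
      thus ?thesis using th ij unfolding B'_def u'_def v'_def by auto
    qed
  qed
  ultimately show ?thesis by blast
qed

theorem lemma2:
  fixes n1 n2 K1 K2 :: nat and z1 z2 :: "nat \<Rightarrow> nat" and \<delta> :: real
  assumes "0 < K1" "0 < K2" "K1 \<le> n1" "K2 \<le> n2"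
    and "\<forall>i<n1. z1 i < K1" "\<forall>j<n2. z2 j < K2"
    and "0 < \<delta>" "\<delta> \<le> 1"
  shows "\<exists>Y. is_delta_net n1 n2 \<delta> (dcbm_set n1 n2 z1 z2) Y \<and>
           ln (real (card Y)) \<le> real (K1 * K2 + n1 + n2) * ln (9 / \<delta>)
             + (real (K1 * K2) + real (n1 + n2) / 2) * ln (real (n1 * n2))"
proof -
  define s where "s = sqrt (real (n1 * n2))"
  have nn: "1 \<le> n1 * n2" using assms by (simp add: Suc_le_eq)
  have s1: "1 \<le> s" unfolding s_def using nn by (simp del: of_nat_mult)
  have sd: "1 \<le> s / \<delta>" using s1 assms by (simp add: le_divide_eq)
  define m where "m = nat \<lceil>3 * s / \<delta>\<rceil>"
  have mge: "3 * s / \<delta> \<le> real m" unfolding m_def by linarith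
  have mle: "real m \<le> 3 * s / \<delta> + 1" unfolding m_def using sd by linarith
  have mpos: "0 < m" using mge sd by linarith
  have mpr: "(0::real) < m" using mpos by simp
  have m1: "real (m + 1) \<le> 9 * s / \<delta>" using mle sd by simp
  define mat where "mat = (\<lambda>(bq::nat\<times>nat\<Rightarrow>nat, uq::nat\<Rightarrow>nat, vq::nat\<Rightarrow>nat) (i::nat) (j::nat).
     if i < n1 \<and> j < n2 then real (bq (z1 i, z2 j)) / m * (real (uq i) / m) * (real (vq j) / m) else (0::real))"
  define P where "P = (PiE ({..<K1} \<times> {..<K2}) (\<lambda>_. {..m})) \<times> (PiE {..<n1} (\<lambda>_. {..m})) \<times> (PiE {..<n2} (\<lambda>_. {..m}))"
  define Y where "Y = mat ` P"
  define D where "D = K1 * K2 + n1 + n2"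
  have cardP: "card P = (m+1) ^ D"
    unfolding P_def D_def by (simp add: card_cartesian_product card_PiE power_add)
  have finP: "finite P" unfolding P_def by (simp add: finite_PiE)
  have finY: "finite Y" unfolding Y_def using finP by simp
  have cY: "card Y \<le> (m+1) ^ D" unfolding Y_def using card_image_le[OF finP] cardP by simp
  have net: "\<forall>A\<in>dcbm_set n1 n2 z1 z2. \<exists>C\<in>Y. frob_dist n1 n2 A C \<le> \<delta>"
  proof
    fix A assume A: "A \<in> dcbm_set n1 n2 z1 z2"
    obtain B u v where B01: "\<forall>a b. 0 \<le> B a b \<and> B a b \<le> 1" and u01: "\<forall>i. 0 \<le> u i \<and> u i \<le> 1"
      and v01: "\<forall>j. 0 \<le> v j \<and> v j \<le> 1" and Aeq: "\<forall>i<n1. \<forall>j<n2. A i j = B (z1 i) (z2 j) * u i * v j"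
      using normalize[OF A] by blast
    define q where "q x = nat \<lfloor>x * m\<rfloor>" for x :: real
    have qa: "0 \<le> x \<Longrightarrow> x \<le> 1 \<Longrightarrow> q x \<le> m \<and> \<bar>x - real (q x) / m\<bar> \<le> 1 / m" for x
      using approx_floor[OF _ _ mpos, of x] unfolding q_def by auto
    define bq where "bq = restrict (\<lambda>(a,b). q (B a b)) ({..<K1} \<times> {..<K2})"
    define uq where "uq = restrict (\<lambda>i. q (u i)) {..<n1}"
    define vq where "vq = restrict (\<lambda>j. q (v j)) {..<n2}"
    have inP: "(bq, uq, vq) \<in> P" unfolding P_def bq_def uq_def vq_def
      using qa B01 u01 v01 by (auto simp: restrict_PiE_iff)
    have entry: "(A i j - mat (bq, uq, vq) i j)^2 \<le> (3 / m)^2" if ij: "i < n1" "j < n2" for i j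
    proof -
      have z: "z1 i < K1" "z2 j < K2" using assms ij by auto
      have me: "mat (bq, uq, vq) i j = real (q (B (z1 i) (z2 j))) / m * (real (q (u i)) / m) * (real (q (v j)) / m)"
        unfolding mat_def bq_def uq_def vq_def using ij z by simp
      have h1: "q (B (z1 i) (z2 j)) \<le> m \<and> \<bar>B (z1 i) (z2 j) - real (q (B (z1 i) (z2 j))) / m\<bar> \<le> 1 / m"
        using qa B01 by blast
      have h2: "q (u i) \<le> m \<and> \<bar>u i - real (q (u i)) / m\<bar> \<le> 1 / m" using qa u01 by blast
      have h3: "q (v j) \<le> m \<and> \<bar>v j - real (q (v j)) / m\<bar> \<le> 1 / m" using qa v01 by blast
      have le1: "real k / m \<le> 1" if "k \<le> m" for k using that mpr by (simp add: divide_le_eq)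
      have "\<bar>A i j - mat (bq, uq, vq) i j\<bar> \<le> 3 * (1 / m)"
        unfolding me Aeq[rule_format, OF ij]
        apply (rule entry_err)
        using B01 u01 v01 h1 h2 h3 le1 mpr by auto
      hence "\<bar>A i j - mat (bq, uq, vq) i j\<bar> \<le> 3 / m" by simp
      thus ?thesis by (metis abs_ge_zero order_trans power_mono power2_abs)
    qed
    have "(\<Sum>i<n1. \<Sum>j<n2. (A i j - mat (bq, uq, vq) i j)^2) \<le> (\<Sum>i<n1. \<Sum>j<n2. (3 / real m)^2)"
      using entry by (intro sum_mono) auto
    also have "\<dots> = real (n1 * n2) * (3 / m)^2" by simp
    finally have "frob_dist n1 n2 A (mat (bq, uq, vq)) \<le> sqrt (real (n1 * n2) * (3 / m)^2)"
      unfolding frob_dist_def by simp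
    also have "\<dots> = s * (3 / m)" unfolding s_def using mpr by (simp add: real_sqrt_mult)
    also have "\<dots> \<le> \<delta>" using mge mpr assms(7) by (simp add: field_simps)
    finally show "\<exists>C\<in>Y. frob_dist n1 n2 A C \<le> \<delta>" using inP unfolding Y_def by blast
  qed
  have "1 \<le> real (n1 * n2)" using nn by (simp del: of_nat_mult)
  hence L0: "0 \<le> ln (real (n1 * n2))" by simp
  have l9: "0 \<le> ln (9 / \<delta>)" using assms by simp
  have bound: "ln (real (card Y)) \<le> real D * ln (9 * s / \<delta>)"
  proof (cases "card Y = 0")
    case True thus ?thesis using sd by simp
  next
    case False
    have "real (card Y) \<le> real ((m+1)^D)" using cY by (simp only: of_nat_le_iff)
    hence "ln (real (card Y)) \<le> ln (real ((m+1)^D))" using False by (simp del: of_nat_power)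
    also have "\<dots> = real D * ln (real (m+1))" by (simp add: ln_realpow)
    also have "\<dots> \<le> real D * ln (9 * s / \<delta>)" using m1 by (intro mult_left_mono) auto
    finally show ?thesis .
  qed
  have "ln (9 * s / \<delta>) = ln (9 / \<delta>) + ln (real (n1 * n2)) / 2"
  proof -
    have "9 * s / \<delta> = (9 / \<delta>) * s" by simp
    moreover have "ln ((9 / \<delta>) * s) = ln (9 / \<delta>) + ln s" using assms s1 by (intro ln_mult_pos) auto
    ultimately have "ln (9 * s / \<delta>) = ln (9 / \<delta>) + ln s" by simp
    moreover have "ln s = ln (real (n1 * n2)) / 2" unfolding s_def using nn
      by (simp add: ln_sqrt)
    ultimately show ?thesis by simp
  qed
  hence "ln (real (card Y)) \<le> real D * ln (9 / \<delta>) + real D / 2 * ln (real (n1 * n2))"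
    using bound by (simp add: algebra_simps)
  also have "\<dots> \<le> real D * ln (9 / \<delta>) + (real (K1 * K2) + real (n1 + n2) / 2) * ln (real (n1 * n2))"
    unfolding D_def using L0 by (intro add_left_mono mult_right_mono) (auto simp: field_simps)
  finally show ?thesis unfolding is_delta_net_def D_def using finY net by blast
qed

end
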